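(* For every finite binary word $a_1a_2\cdots a_n$ (with $a_i\in\{0,1\}$) one has $$\omega(a_1a_2\cdots a_n)\equiv\sum_{i=1}^n(-1)^ia_i \pmod 3.$$
   Context: The weight $\omega$ is defined on finite binary words (paths in the infinite rooted planar binary tree, $0$ = left edge, $1$ = right edge) as the color of the region immediately to the left of the vertex $z$. The coloring is the proper $3$-coloring by $\mathbb{Z}_3=\{0,1,2\}$ of the complement of the tree (drawn in the upper half plane with a root edge) in which the regions to the left of, to the right of and below the root are colored $0,1,2$. Equivalently, attach to each word $z$ a triple $(L(z),R(z),B(z))$ with - $(L,R,B)(\emptyset)=(0,1,2)$, - $(L,R,B)(z0)=(L(z),B(z),R(z))$, - $(L,R,B)(z1)=(B(z),R(z),L(z))$, and set $\omega(z)=L(z)$. *)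

theory Defs
  imports Main
begin

text \<open>Binary words are lists of naturals with letters in {0,1}; the first letter
of the word is the head of the list. Colours in Z_3 are represented by
integers taken mod 3 (values in {0,1,2}).\<close>

fun step :: "int \<times> int \<times> int \<Rightarrow> nat \<Rightarrow> int \<times> int \<times> int" where
  "step (L, R, B) a = (if a = 0 then (L, B, R) else (B, R, L))"

definition LRB :: "nat list \<Rightarrow> int \<times> int \<times> int" where
  "LRB z = foldl step (0, 1, 2) z"

definition omega :: "nat list \<Rightarrow> int" where
  "omega z = fst (LRB z)"

end

theory Submission
  imports Defs
begin

definition asum :: "nat list \<Rightarrow> int" where
  "asum a = (\<Sum>i = 1..length a. (-1) ^ i * int (a ! (i - 1)))"

lemma asum_snoc: "asum (xs @ [x]) = asum xs + (-1) ^ (Suc (length xs)) * int x"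
proof -
  have "asum (xs @ [x]) = (\<Sum>i = 1..length xs. (-1) ^ i * int ((xs @ [x]) ! (i - 1)))
        + (-1) ^ (Suc (length xs)) * int x"
    by (simp add: asum_def)
  also have "(\<Sum>i = 1..length xs. (-1) ^ i * int ((xs @ [x]) ! (i - 1))) = asum xs"
    unfolding asum_def by (rule sum.cong) (auto simp: nth_append)
  finally show ?thesis .
qed

lemma ar0: fixes L R B s e :: int assumes "e=1 \<or> e=-1" "L mod 3 = s mod 3" "R mod 3 = (L+e) mod 3" "B mod 3 = (L+2*e) mod 3"
shows "L mod 3 = s mod 3 \<and> B mod 3 = (L + -e) mod 3 \<and> R mod 3 = (L + 2*(-e)) mod 3"
  using assms unfolding mod_eq_dvd_iff by presburger
lemma ar1: fixes L R B s e :: int assumes "e=1 \<or> e=-1" "L mod 3 = s mod 3" "R mod 3 = (L+e) mod 3" "B mod 3 = (L+2*e) mod 3"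
shows "B mod 3 = (s + -e) mod 3 \<and> R mod 3 = (B + -e) mod 3 \<and> L mod 3 = (B + 2*(-e)) mod 3"
  using assms unfolding mod_eq_dvd_iff by presburger

lemma LRB_snoc: "LRB (xs @ [x]) = step (LRB xs) x"
  by (simp add: LRB_def)

lemma inv:
  assumes "set xs \<subseteq> {0, 1}"
  shows "fst (LRB xs) mod 3 = asum xs mod 3
    \<and> fst (snd (LRB xs)) mod 3 = (fst (LRB xs) + (-1) ^ length xs) mod 3
    \<and> snd (snd (LRB xs)) mod 3 = (fst (LRB xs) + 2 * (-1) ^ length xs) mod 3"
  using assms
proof (induction xs rule: rev_induct)
  case Nil
  then show ?case by (simp add: LRB_def asum_def)
next
  case (snoc x xs)
  obtain L R B where e: "LRB xs = (L, R, B)" by (cases "LRB xs") auto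
  have x: "x = 0 \<or> x = 1" using snoc.prems by auto
  have IH: "L mod 3 = asum xs mod 3" "R mod 3 = (L + (-1) ^ length xs) mod 3"
     "B mod 3 = (L + 2 * (-1) ^ length xs) mod 3" using snoc e by auto
  have sg: "(-1::int) ^ length xs = 1 \<or> (-1::int) ^ length xs = -1"
    by (simp add: minus_one_power_iff)
  have sn: "(-1::int) ^ Suc (length xs) = - ((-1) ^ length xs)" by simp
  from x show ?case
  proof
    assume "x = 0"
    then show ?thesis using ar0[OF sg IH]
      unfolding LRB_snoc e asum_snoc sn by simp
  next
    assume "x = 1"
    then show ?thesis using ar1[OF sg IH]
      unfolding LRB_snoc e asum_snoc sn by simp
  qed
qed

theorem proposition2p5:
  fixes a :: "nat list"
  assumes "set a \<subseteq> {0, 1}"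
  shows "omega a mod 3 = (\<Sum>i = 1..length a. (-1) ^ i * int (a ! (i - 1))) mod 3"
  using inv[OF assms] by (simp add: omega_def asum_def)

end
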